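(* Let $\mathbb{X}$ be a real or complex Banach algebra with identity, $\mathcal{G}$ its group of units, $k\ge1$ an integer, and $g_n:\mathbb{X}\to\mathbb{X}$ ($n\ge0$) functions with $|g_n(\xi)|\le\sigma|\xi|$ for all $\xi\in\mathbb{X}$, all $n$, for some real $\sigma>0$. Let $a_0,\dots,a_k\in\mathbb{X}$ with $a_k\ne0$ and $b\in\mathcal{G}$ with $|b|<1$. Suppose $$a_0b^k+a_1b^{k-1}+\cdots+a_k=b^{k+1}$$ and $$\sum_{i=0}^{k-1}\big|b^{i+1}-a_0b^i-a_1b^{i-1}-\cdots-a_i\big|<1-\sigma.$$ Then every solution of $$x_{n+1}=a_0x_n+a_1x_{n-1}+\cdots+a_kx_{n-k}+g_n(x_n-bx_{n-1}),\quad n\ge0,$$ with initial values in $\mathbb{X}$ converges to $0$.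
   Context: A Banach algebra with identity is a Banach space $\mathbb{X}$ (norm $|\cdot|$) with an associative bilinear multiplication satisfying $|xy|\le|x||y|$ and identity $1$ with $|1|=1$; $\mathcal{G}$ is the set of invertible elements. *)

theory Defs
  imports "HOL-Analysis.Analysis"
begin

end

theory Submission imports Defs begin

definition ee :: "(nat \<Rightarrow> 'a::ring_1) \<Rightarrow> 'a \<Rightarrow> nat \<Rightarrow> 'a" where
  "ee a b K = b^K - (\<Sum>j<K. a j * b^(K-1-j))"

lemma ee_Suc: "ee a b (Suc K) = ee a b K * b - a K"
proof -
  have "(\<Sum>j<K. a j * b^(K-1-j)) * b = (\<Sum>j<K. a j * b^(Suc K-1-j))"
    unfolding sum_distrib_right
  proof (rule sum.cong[OF refl])
    fix j assume "j \<in> {..<K}"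
    then have "Suc K - 1 - j = Suc (K-1-j)" by auto
    then show "a j * b ^ (K - 1 - j) * b = a j * b ^ (Suc K - 1 - j)"
      by (simp add: mult.assoc power_commutes)
  qed
  then show ?thesis unfolding ee_def
    by (simp add: algebra_simps power_Suc2 power_commutes)
qed

lemma tele:
  fixes x :: "int \<Rightarrow> 'a::ring_1"
  shows "(\<Sum>i<K. (- ee a b (Suc i)) * (x (n - int i) - b * x (n - int i - 1)))
     = (\<Sum>j<K. a j * x (n - int j)) - b * x n + ee a b K * b * x (n - int K)"
proof (induction K)
  case 0
  then show ?case by (simp add: ee_def)
next
  case (Suc K)
  have e: "n - int (Suc K) = n - int K - 1" by simp
  show ?case using Suc by (simp add: ee_Suc e algebra_simps)
qed

lemma decay1:
  fixes w \<alpha> :: "nat \<Rightarrow> real" and k :: nat and \<sigma> :: real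
  assumes k: "k \<ge> 1" and sp: "\<sigma> > 0" and wn: "\<And>m. w m \<ge> 0" and an: "\<And>i. \<alpha> i \<ge> 0"
    and th: "(\<Sum>i<k. \<alpha> i) + \<sigma> < 1"
    and rec: "\<And>m. m \<ge> k - 1 \<Longrightarrow> w (Suc m) \<le> (\<Sum>i<k. \<alpha> i * w (m - i)) + \<sigma> * w m"
  shows "\<exists>C \<rho>. 0 < \<rho> \<and> \<rho> < 1 \<and> C \<ge> 0 \<and> (\<forall>m. w m \<le> C * \<rho> ^ m)"
proof -
  define \<theta> where "\<theta> = (\<Sum>i<k. \<alpha> i) + \<sigma>"
  have tp: "\<theta> > 0" unfolding \<theta>_def using sp an by (simp add: add_nonneg_pos sum_nonneg)
  define \<rho> where "\<rho> = root k \<theta>"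
  have kp: "0 < k" using k by simp
  have rp: "\<rho> > 0" unfolding \<rho>_def using tp kp by simp
  have r1: "\<rho> < 1" unfolding \<rho>_def using tp kp th \<theta>_def by (simp add: real_root_lt_1_iff)
  have rk: "\<rho> ^ k = \<theta>" unfolding \<rho>_def using tp kp by simp
  define C where "C = (\<Sum>m<k. w m / \<rho> ^ m)"
  have C0: "C \<ge> 0" unfolding C_def using wn rp by (simp add: sum_nonneg)
  have main: "w m \<le> C * \<rho> ^ m" for m
  proof (induction m rule: less_induct)
    case (less m)
    show ?case
    proof (cases "m < k")
      case True
      have "w m / \<rho> ^ m \<le> C" unfolding C_def
        by (rule member_le_sum[where f="\<lambda>m. w m / \<rho> ^ m"]) (use True wn rp in auto)
      then show ?thesis using rp by (simp add: divide_le_eq)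
    next
      case False
      define m' where "m' = m - 1"
      have m': "m = Suc m'" "m' \<ge> k - 1" using False kp unfolding m'_def by arith+
      have "\<theta> * w m \<le> \<theta> * ((\<Sum>i<k. \<alpha> i * w (m' - i)) + \<sigma> * w m')"
        unfolding m'(1) using rec[OF m'(2)] tp by (intro mult_left_mono) auto
      also have "\<dots> \<le> \<theta> * ((\<Sum>i<k. \<alpha> i * (C * \<rho> ^ (m' - i))) + \<sigma> * (C * \<rho> ^ m'))"
      proof -
        have "(\<Sum>i<k. \<alpha> i * w (m' - i)) \<le> (\<Sum>i<k. \<alpha> i * (C * \<rho> ^ (m' - i)))"
        proof (rule sum_mono)
          fix i assume "i \<in> {..<k}"
          have "m' - i < m" using m' by simp
          then have "w (m' - i) \<le> C * \<rho> ^ (m' - i)" by (rule less)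
          then show "\<alpha> i * w (m' - i) \<le> \<alpha> i * (C * \<rho> ^ (m' - i))" using an[of i] by (rule mult_left_mono)
        qed
        moreover have "\<sigma> * w m' \<le> \<sigma> * (C * \<rho> ^ m')"
        proof -
          have "m' < m" using m' by simp
          then have "w m' \<le> C * \<rho> ^ m'" by (rule less)
          then show ?thesis using sp by (intro mult_left_mono) auto
        qed
        ultimately have "(\<Sum>i<k. \<alpha> i * w (m' - i)) + \<sigma> * w m' \<le> (\<Sum>i<k. \<alpha> i * (C * \<rho> ^ (m' - i))) + \<sigma> * (C * \<rho> ^ m')"
          by (rule add_mono)
        then show ?thesis using less_imp_le[OF tp] by (rule mult_left_mono)
      qed
      also have "\<dots> = (\<Sum>i<k. \<alpha> i * C * (\<rho> ^ (m' - i) * \<rho> ^ k)) + \<sigma> * C * (\<rho> ^ m' * \<rho> ^ k)"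
        unfolding rk distrib_left sum_distrib_left by (intro arg_cong2[where f="(+)"] sum.cong refl) (simp_all add: mult_ac)
      also have "\<dots> \<le> (\<Sum>i<k. \<alpha> i * C * \<rho> ^ m) + \<sigma> * C * \<rho> ^ m"
      proof (rule add_mono)
        show "(\<Sum>i<k. \<alpha> i * C * (\<rho> ^ (m' - i) * \<rho> ^ k)) \<le> (\<Sum>i<k. \<alpha> i * C * \<rho> ^ m)"
        proof (rule sum_mono)
          fix i assume "i \<in> {..<k}"
          then have "m \<le> m' - i + k" using m' by auto
          then have "\<rho> ^ (m' - i + k) \<le> \<rho> ^ m" by (rule power_decreasing) (use rp r1 in auto)
          then have "\<rho> ^ (m' - i) * \<rho> ^ k \<le> \<rho> ^ m" by (simp add: power_add)
          moreover have "0 \<le> \<alpha> i * C" using an[of i] C0 by simp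
          ultimately show "\<alpha> i * C * (\<rho> ^ (m' - i) * \<rho> ^ k) \<le> \<alpha> i * C * \<rho> ^ m"
            by (rule mult_left_mono)
        qed
        have "m \<le> m' + k" using m' k by auto
        then have "\<rho> ^ (m' + k) \<le> \<rho> ^ m" by (rule power_decreasing) (use rp r1 in auto)
        then have "\<rho> ^ m' * \<rho> ^ k \<le> \<rho> ^ m" by (simp add: power_add)
        moreover have "0 \<le> \<sigma> * C" using sp C0 by simp
        ultimately show "\<sigma> * C * (\<rho> ^ m' * \<rho> ^ k) \<le> \<sigma> * C * \<rho> ^ m"
          by (rule mult_left_mono)
      qed
      also have "\<dots> = \<theta> * (C * \<rho> ^ m)"
      proof -
        have "(\<Sum>i<k. \<alpha> i * C * \<rho> ^ m) = (\<Sum>i<k. \<alpha> i) * (C * \<rho> ^ m)"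
          by (simp add: sum_distrib_right mult.assoc)
        then show ?thesis unfolding \<theta>_def by (simp add: distrib_right mult.assoc)
      qed
      finally have "\<theta> * w m \<le> \<theta> * (C * \<rho> ^ m)" .
      then show ?thesis using tp by simp
    qed
  qed
  show ?thesis using main rp r1 C0 by blast
qed

lemma decay2:
  fixes u :: "nat \<Rightarrow> real"
  assumes b0: "0 \<le> \<beta>" and b1: "\<beta> < 1" and r0: "0 \<le> \<rho>" and r1: "\<rho> < 1" and C0: "C \<ge> 0"
    and u0: "\<And>n. u n \<ge> 0"
    and rec: "\<And>n. u (Suc n) \<le> \<beta> * u n + C * \<rho> ^ Suc n"
  shows "u \<longlonglongrightarrow> 0"
proof -
  define \<tau> where "\<tau> = (1 + max \<beta> \<rho>) / 2"
  have t: "\<beta> < \<tau>" "\<rho> \<le> \<tau>" "\<tau> < 1" "0 \<le> \<tau>" unfolding \<tau>_def using b0 b1 r0 r1 by auto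
  define D where "D = max (u 0) (C / (\<tau> - \<beta>))"
  have DC: "D * (\<tau> - \<beta>) \<ge> C"
  proof -
    have "C / (\<tau> - \<beta>) \<le> D" unfolding D_def by simp
    then have "C / (\<tau> - \<beta>) * (\<tau> - \<beta>) \<le> D * (\<tau> - \<beta>)" using t by (intro mult_right_mono) auto
    then show ?thesis using t by simp
  qed
  have D0: "D \<ge> 0" unfolding D_def using u0[of 0] by (simp add: le_max_iff_disj)
  have b: "u n \<le> D * \<tau> ^ n" for n
  proof (induction n)
    case 0 then show ?case unfolding D_def by simp
  next
    case (Suc n)
    have "\<rho> ^ Suc n \<le> \<tau> ^ n"
    proof -
      have "\<rho> ^ Suc n \<le> \<rho> ^ n" using power_decreasing[of n "Suc n" \<rho>] r0 r1 by simp
      also have "\<dots> \<le> \<tau> ^ n" using r0 t by (intro power_mono) auto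
      finally show ?thesis .
    qed
    then have "u (Suc n) \<le> \<beta> * (D * \<tau> ^ n) + C * \<tau> ^ n"
    proof -
      have "\<beta> * u n \<le> \<beta> * (D * \<tau> ^ n)" using Suc b0 by (rule mult_left_mono)
      moreover have "C * \<rho> ^ Suc n \<le> C * \<tau> ^ n" using \<open>\<rho> ^ Suc n \<le> \<tau> ^ n\<close> C0 by (rule mult_left_mono)
      ultimately show ?thesis using rec[of n] by linarith
    qed
    also have "\<dots> \<le> \<beta> * (D * \<tau> ^ n) + D * (\<tau> - \<beta>) * \<tau> ^ n"
    proof -
      have "C * \<tau> ^ n \<le> D * (\<tau> - \<beta>) * \<tau> ^ n" using DC t by (intro mult_right_mono) auto
      then show ?thesis by linarith
    qed
    also have "\<dots> = D * \<tau> ^ Suc n" by (simp add: algebra_simps)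
    finally show ?case .
  qed
  have "(\<lambda>n. \<tau> ^ n) \<longlonglongrightarrow> 0" using t by (intro LIMSEQ_power_zero) auto
  then have "(\<lambda>n. D * \<tau> ^ n) \<longlonglongrightarrow> 0" by (rule tendsto_mult_right_zero)
  moreover have "\<forall>\<^sub>F n in sequentially. norm (u n) \<le> D * \<tau> ^ n" using b u0 by simp
  ultimately show ?thesis by (rule Lim_null_comparison[rotated])
qed

theorem corollary2:
  fixes a :: "nat \<Rightarrow> 'a::{real_normed_algebra_1, banach}"
    and b :: "'a"
    and g :: "nat \<Rightarrow> 'a \<Rightarrow> 'a"
    and x :: "int \<Rightarrow> 'a"
    and k :: nat and \<sigma> :: real
  assumes "k \<ge> 1"
    and "\<sigma> > 0"
    and "\<And>n \<xi>. norm (g n \<xi>) \<le> \<sigma> * norm \<xi>"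
    and "a k \<noteq> 0"
    and "\<exists>c. b * c = 1 \<and> c * b = 1"
    and "norm b < 1"
    and "(\<Sum>j\<le>k. a j * b ^ (k - j)) = b ^ (k + 1)"
    and "(\<Sum>i<k. norm (b ^ (i + 1) - (\<Sum>j\<le>i. a j * b ^ (i - j)))) < 1 - \<sigma>"
    and "\<And>n::nat. x (int n + 1) =
           (\<Sum>j\<le>k. a j * x (int n - int j)) + g n (x (int n) - b * x (int n - 1))"
  shows "(\<lambda>n. x (int n)) \<longlonglongrightarrow> 0"
proof -
  note k = assms(1) and sp = assms(2) and gb = assms(3) and bn = assms(6)
    and root = assms(7) and small = assms(8) and xr = assms(9)
  define y where "y n = x n - b * x (n - 1)" for n
  define d where "d i = - ee a b (Suc i)" for i
  have es: "ee a b (Suc i) = b ^ (i + 1) - (\<Sum>j\<le>i. a j * b ^ (i - j))" for i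
    by (simp add: ee_def lessThan_Suc_atMost)
  have "ee a b (Suc k) = 0" using root by (simp add: es)
  then have eK: "ee a b k * b = a k" by (simp add: ee_Suc)
  have yrec: "y (int n + 1) = (\<Sum>i<k. d i * y (int n - int i)) + g n (y (int n))" for n :: nat
  proof -
    have t0: "(\<Sum>i<k. d i * y (int n - int i)) = (\<Sum>i<k. (- ee a b (Suc i)) * (x (int n - int i) - b * x (int n - int i - 1)))"
      by (simp only: d_def y_def)
    have t: "(\<Sum>i<k. d i * y (int n - int i)) = (\<Sum>j<k. a j * x (int n - int j)) - b * x (int n) + a k * x (int n - int k)"
      unfolding t0 tele eK ..
    have s: "(\<Sum>j\<le>k. a j * x (int n - int j)) = (\<Sum>j<k. a j * x (int n - int j)) + a k * x (int n - int k)"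
      by (simp add: lessThan_Suc_atMost[symmetric])
    have yy: "y (int n + 1) = x (int n + 1) - b * x (int n)" by (simp add: y_def)
    show ?thesis unfolding t yy xr[of n] s unfolding y_def[of "int n"] by (simp only: diff_add_eq add_diff_eq add.assoc add.commute add.left_commute)
  qed
  define \<alpha> where "\<alpha> i = norm (d i)" for i
  define w where "w m = norm (y (int m - int k + 1))" for m
  have "\<exists>C \<rho>. 0 < \<rho> \<and> \<rho> < 1 \<and> C \<ge> 0 \<and> (\<forall>m. w m \<le> C * \<rho> ^ m)"
  proof (rule decay1[where \<alpha>=\<alpha> and \<sigma>=\<sigma> and k=k])
    have "\<alpha> i = norm (b ^ (i + 1) - (\<Sum>j\<le>i. a j * b ^ (i - j)))" for i
      unfolding \<alpha>_def d_def es by (simp only: norm_minus_cancel)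
    then show "(\<Sum>i<k. \<alpha> i) + \<sigma> < 1" using small by simp
  next
    fix m assume m: "k - 1 \<le> m"
    define n where "n = m - (k - 1)"
    have n1: "int (Suc m) - int k + 1 = int n + 1" using m k unfolding n_def by auto
    have n2: "int n - int i = int (m - i) - int k + 1" if "i < k" for i
      using that m k unfolding n_def by auto
    have n3: "int n = int m - int k + 1" using m k unfolding n_def by auto
    have "w (Suc m) = norm (y (int n + 1))" unfolding w_def n1 ..
    also have "\<dots> \<le> norm (\<Sum>i<k. d i * y (int n - int i)) + norm (g n (y (int n)))"
      unfolding yrec by (rule norm_triangle_ineq)
    also have "\<dots> \<le> (\<Sum>i<k. \<alpha> i * w (m - i)) + \<sigma> * w m"
    proof (rule add_mono)
      have "norm (\<Sum>i<k. d i * y (int n - int i)) \<le> (\<Sum>i<k. norm (d i * y (int n - int i)))"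
        by (rule norm_sum)
      also have "\<dots> \<le> (\<Sum>i<k. \<alpha> i * w (m - i))"
        by (rule sum_mono) (simp add: \<alpha>_def w_def n2 norm_mult_ineq)
      finally show "norm (\<Sum>i<k. d i * y (int n - int i)) \<le> (\<Sum>i<k. \<alpha> i * w (m - i))" .
      show "norm (g n (y (int n))) \<le> \<sigma> * w m" using gb unfolding w_def n3 by simp
    qed
    finally show "w (Suc m) \<le> (\<Sum>i<k. \<alpha> i * w (m - i)) + \<sigma> * w m" .
  qed (use k sp in \<open>auto simp: w_def \<alpha>_def\<close>)
  then obtain C \<rho> where Cr: "0 < \<rho>" "\<rho> < 1" "C \<ge> 0" "\<And>m. w m \<le> C * \<rho> ^ m" by blast
  have "(\<lambda>n. norm (x (int n))) \<longlonglongrightarrow> 0"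
  proof (rule decay2[where \<beta>="norm b" and \<rho>=\<rho> and C=C])
    fix n
    have e: "int (n + k) - int k + 1 = int n + 1" by simp
    have ii: "int (Suc n) = int n + 1" by simp
    have "x (int (Suc n)) = b * x (int n) + y (int n + 1)" unfolding ii y_def by simp
    then have "norm (x (int (Suc n))) \<le> norm b * norm (x (int n)) + w (n + k)"
      unfolding w_def e using norm_triangle_ineq[of "b * x (int n)" "y (int n + 1)"] norm_mult_ineq[of b "x (int n)"] by simp
    also have "\<dots> \<le> norm b * norm (x (int n)) + C * \<rho> ^ Suc n"
    proof -
      have "\<rho> ^ (n + k) \<le> \<rho> ^ Suc n" using Cr k by (intro power_decreasing) auto
      then have "C * \<rho> ^ (n + k) \<le> C * \<rho> ^ Suc n" using Cr(3) by (rule mult_left_mono)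
      then have "w (n + k) \<le> C * \<rho> ^ Suc n" using Cr(4)[of "n+k"] by linarith
      then show ?thesis by simp
    qed
    finally show "norm (x (int (Suc n))) \<le> norm b * norm (x (int n)) + C * \<rho> ^ Suc n" .
  qed (use bn Cr in auto)
  then show ?thesis by (simp add: tendsto_norm_zero_iff)
qed
end
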